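(* Let $n\in\mathbb{N}$. The space $\mathcal{C}^n[a,b]$ consists exactly of those functions $f$ on $[a,b]$ that can be represented in the form $$f(x)=\frac{1}{(n-1)!}\int_a^x(x-t)^{n-1}\phi(t)\,dt+\sum_{k=0}^{n-1}c_k(x-a)^k,\qquad x\in[a,b],$$ where $\phi\in D_{HK}$ and $c_0,\dots,c_{n-1}$ are arbitrary real constants.
   Context: Fix real numbers $a<b$. Let $C_0=\{F\in C[a,b]:F(a)=0\}$. A distribution $\phi$ on $(a,b)$ is Henstock–Kurzweil integrable if $\phi=F'$ (distributional derivative) for some (unique) $F\in C_0$; its distributional Henstock–Kurzweil integral is $\int_c^d \phi=F(d)-F(c)$, and integrals of $\phi$ against functions of bounded variation (such as $t\mapsto(x-t)^{n-1}$) are defined via $\int_a^x\phi g=F(x)g(x)-\int_a^xF\,dg$. $D_{HK}$ denotes the space of such distributions. For $n\in\mathbb{N}$, $\mathcal{C}^n[a,b]$ is the set of functions $F$ on $[a,b]$ whose classical derivative $F^{(n-1)}=\left(\frac{d}{dx}\right)^{n-1}F$ exists and is continuous on $[a,b]$ (so $\mathcal{C}^1[a,b]=C[a,b]$). *)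

theory Defs
  imports "HOL-Analysis.Analysis"
begin

definition test_fun :: "real \<Rightarrow> real \<Rightarrow> (real \<Rightarrow> real) \<Rightarrow> bool" where
  "test_fun a b \<psi> \<longleftrightarrow>
     (\<forall>k x. ((deriv ^^ k) \<psi>) differentiable (at x)) \<and>
     (\<exists>c d. a < c \<and> c \<le> d \<and> d < b \<and> (\<forall>x. x \<notin> {c..d} \<longrightarrow> \<psi> x = 0))"

type_synonym distr = "(real \<Rightarrow> real) \<Rightarrow> real"

definition C0 :: "real \<Rightarrow> real \<Rightarrow> (real \<Rightarrow> real) set" where
  "C0 a b = {F. continuous_on {a..b} F \<and> F a = 0}"

definition distr_primitive :: "real \<Rightarrow> real \<Rightarrow> distr \<Rightarrow> (real \<Rightarrow> real) \<Rightarrow> bool" where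
  "distr_primitive a b T F \<longleftrightarrow> F \<in> C0 a b \<and>
     (\<forall>\<psi>. test_fun a b \<psi> \<longrightarrow> T \<psi> = - integral {a..b} (\<lambda>x. F x * deriv \<psi> x))"

definition D_HK :: "real \<Rightarrow> real \<Rightarrow> distr set" where
  "D_HK a b = {T. \<exists>F. distr_primitive a b T F}"

text \<open>Integral of T against g over [a,x]:  F(x) g(x) - \<integral>_a^x F dg, where for the
  (continuously differentiable) integrands used here the Stieltjes integral
  \<integral>_a^x F dg is written as \<integral>_a^x F(t) g'(t) dt.\<close>
definition hk_int_mult :: "real \<Rightarrow> real \<Rightarrow> distr \<Rightarrow> (real \<Rightarrow> real) \<Rightarrow> real \<Rightarrow> real" where
  "hk_int_mult a b T g x = (THE v. \<exists>F. distr_primitive a b T F \<and>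
       v = F x * g x - integral {a..x} (\<lambda>t. F t * deriv g t))"

definition Cn :: "real \<Rightarrow> real \<Rightarrow> nat \<Rightarrow> (real \<Rightarrow> real) \<Rightarrow> bool" where
  "Cn a b n f \<longleftrightarrow> (\<exists>D :: nat \<Rightarrow> real \<Rightarrow> real.
      (\<forall>x\<in>{a..b}. D 0 x = f x) \<and>
      (\<forall>k. k + 1 < n \<longrightarrow> (\<forall>x\<in>{a..b}. (D k has_real_derivative D (Suc k) x) (at x within {a..b}))) \<and>
      continuous_on {a..b} (D (n - 1)))"

end

theory Submission
  imports Defs "HOL-Computational_Algebra.Polynomial"
begin

definition sm :: "nat \<Rightarrow> (real \<Rightarrow> real) \<Rightarrow> bool" where
  "sm k f \<longleftrightarrow> (\<exists>D. D 0 = f \<and> (\<forall>j<k. \<forall>x. (D j has_real_derivative D (Suc j) x) (at x)))"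

lemma sm_0[simp]: "sm 0 f"
  unfolding sm_def by auto

lemma sm_Suc: "sm (Suc k) f \<longleftrightarrow> (\<exists>f'. (\<forall>x. (f has_real_derivative f' x) (at x)) \<and> sm k f')"
proof
  assume "sm (Suc k) f"
  then obtain D where D: "D 0 = f" "\<forall>j<Suc k. \<forall>x. (D j has_real_derivative D (Suc j) x) (at x)"
    unfolding sm_def by blast
  show "\<exists>f'. (\<forall>x. (f has_real_derivative f' x) (at x)) \<and> sm k f'"
    apply (rule exI[of _ "D 1"])
    using D unfolding sm_def
    by (auto intro!: exI[of _ "\<lambda>j. D (Suc j)"])
next
  assume "\<exists>f'. (\<forall>x. (f has_real_derivative f' x) (at x)) \<and> sm k f'"
  then obtain f' D where f': "\<forall>x. (f has_real_derivative f' x) (at x)" and D: "D 0 = f'"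
     "\<forall>j<k. \<forall>x. (D j has_real_derivative D (Suc j) x) (at x)"
    unfolding sm_def by blast
  show "sm (Suc k) f"
    unfolding sm_def
    apply (rule exI[of _ "\<lambda>j. case j of 0 \<Rightarrow> f | Suc i \<Rightarrow> D i"])
    using f' D by (auto simp: less_Suc_eq_0_disj)
qed

lemma sm_mono: "sm (Suc k) f \<Longrightarrow> sm k f"
  unfolding sm_def by auto

lemma sm_add: "sm k f \<Longrightarrow> sm k g \<Longrightarrow> sm k (\<lambda>x. f x + g x)"
proof -
  assume "sm k f" "sm k g"
  then obtain D E where D: "D 0 = f" "\<forall>j<k. \<forall>x. (D j has_real_derivative D (Suc j) x) (at x)"
    and E: "E 0 = g" "\<forall>j<k. \<forall>x. (E j has_real_derivative E (Suc j) x) (at x)"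
    unfolding sm_def by blast
  show ?thesis unfolding sm_def
    apply (rule exI[of _ "\<lambda>j x. D j x + E j x"])
    using D E by (auto intro!: derivative_eq_intros)
qed

lemma sm_cmult: "sm k f \<Longrightarrow> sm k (\<lambda>x. c * f x)"
proof -
  assume "sm k f"
  then obtain D where D: "D 0 = f" "\<forall>j<k. \<forall>x. (D j has_real_derivative D (Suc j) x) (at x)"
    unfolding sm_def by blast
  show ?thesis unfolding sm_def
    apply (rule exI[of _ "\<lambda>j x. c * D j x"])
    using D by (auto intro!: derivative_eq_intros)
qed

lemma sm_const: "sm k (\<lambda>x. c)"
  unfolding sm_def
  by (rule exI[of _ "\<lambda>j x. if j = 0 then c else 0"]) (auto intro!: derivative_eq_intros)

lemma sm_affine: "sm k f \<Longrightarrow> sm k (\<lambda>x. f (s * x + t))"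
proof -
  assume "sm k f"
  then obtain D where D: "D 0 = f" "\<forall>j<k. \<forall>x. (D j has_real_derivative D (Suc j) x) (at x)"
    unfolding sm_def by blast
  show ?thesis unfolding sm_def
  proof (rule exI[of _ "\<lambda>j x. s ^ j * D j (s * x + t)"], safe)
    show "(\<lambda>x. s ^ 0 * D 0 (s * x + t)) = (\<lambda>x. f (s * x + t))" using D by simp
    fix j x assume j: "j < k"
    have "((\<lambda>x. D j (s * x + t)) has_real_derivative D (Suc j) (s * x + t) * s) (at x)"
      using D(2) j by (auto intro!: DERIV_chain2[where f="D j"] derivative_eq_intros)
    then show "((\<lambda>x. s ^ j * D j (s * x + t)) has_real_derivative s ^ Suc j * D (Suc j) (s * x + t)) (at x)"
      by (auto intro!: derivative_eq_intros simp: algebra_simps)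
  qed
qed

lemma sm_mult: "sm k f \<Longrightarrow> sm k g \<Longrightarrow> sm k (\<lambda>x. f x * g x)"
proof (induction k arbitrary: f g)
  case 0 then show ?case by simp
next
  case (Suc k)
  from Suc.prems(1) obtain f' where f': "\<forall>x. (f has_real_derivative f' x) (at x)" "sm k f'"
    unfolding sm_Suc by blast
  from Suc.prems(2) obtain g' where g': "\<forall>x. (g has_real_derivative g' x) (at x)" "sm k g'"
    unfolding sm_Suc by blast
  have "sm k (\<lambda>x. f' x * g x + f x * g' x)"
    using Suc.IH[OF f'(2) sm_mono[OF Suc.prems(2)]] Suc.IH[OF sm_mono[OF Suc.prems(1)] g'(2)]
    by (intro sm_add)
  moreover have "\<forall>x. ((\<lambda>x. f x * g x) has_real_derivative f' x * g x + f x * g' x) (at x)"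
    using f' g' by (auto intro!: derivative_eq_intros)
  ultimately show ?case unfolding sm_Suc
    by (intro exI[where x="\<lambda>x. f' x * g x + f x * g' x"]) simp
qed

lemma sm_deriv:
  assumes "sm (Suc k) f"
  shows "(deriv ^^ k) f differentiable (at x)"
proof -
  obtain D where D: "D 0 = f" "\<forall>j<Suc k. \<forall>x. (D j has_real_derivative D (Suc j) x) (at x)"
    using assms unfolding sm_def by blast
  have "j \<le> k \<Longrightarrow> (deriv ^^ j) f = D j" for j
  proof (induction j)
    case 0 then show ?case using D by simp
  next
    case (Suc j)
    then have "(deriv ^^ Suc j) f = deriv (D j)" by simp
    also have "\<dots> = D (Suc j)" using D(2) Suc.prems by (auto intro!: DERIV_imp_deriv)
    finally show ?case .
  qed
  then have "(deriv ^^ k) f = D k" by simp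
  then show ?thesis using D(2) real_differentiable_def by auto
qed

definition hf :: "real \<Rightarrow> real" where "hf t = (if t > 0 then exp (-1/t) else 0)"

fun PP :: "nat \<Rightarrow> real poly" where
  "PP 0 = 1"
| "PP (Suc k) = [:0,0,1:] * (PP k - pderiv (PP k))"

definition Hd :: "nat \<Rightarrow> real \<Rightarrow> real" where
  "Hd k t = (if t > 0 then poly (PP k) (1/t) * exp (-1/t) else 0)"

lemma poly_exp_lim: fixes Q :: "real poly" shows "((\<lambda>s. poly Q s * exp (-s)) \<longlongrightarrow> 0) at_top"
proof -
  have "((\<lambda>s. \<Sum>i\<le>degree Q. coeff Q i * (s ^ i / exp s)) \<longlongrightarrow> (\<Sum>i\<le>degree Q. coeff Q i * 0)) at_top"
    by (intro tendsto_intros tendsto_power_div_exp_0)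
  moreover have "(\<Sum>i\<le>degree Q. coeff Q i * (s ^ i / exp s)) = poly Q s * exp (-s)" for s
  proof -
    have "(\<Sum>i\<le>degree Q. coeff Q i * (s ^ i / exp s)) = (\<Sum>i\<le>degree Q. coeff Q i * s ^ i) / exp s"
      by (simp add: sum_divide_distrib)
    then show ?thesis by (simp add: poly_altdef exp_minus divide_inverse)
  qed
  ultimately show ?thesis by simp
qed

lemma Hd_lim: "((\<lambda>t. Hd k t / t) \<longlongrightarrow> 0) (at_right 0)"
proof -
  have "((\<lambda>s. poly ([:0,1:] * PP k) s * exp (-s)) \<longlongrightarrow> 0) at_top"
    by (rule poly_exp_lim)
  then have "((\<lambda>t. poly ([:0,1:] * PP k) (inverse t) * exp (- inverse t)) \<longlongrightarrow> 0) (at_right 0)"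
    by (rule filterlim_compose[OF _ filterlim_inverse_at_top_right])
  moreover have "\<forall>\<^sub>F t in at_right 0. poly ([:0,1:] * PP k) (inverse t) * exp (- inverse t) = Hd k t / t"
    using eventually_at_right_less[of "0::real"]
    by eventually_elim (auto simp: Hd_def inverse_eq_divide)
  ultimately show ?thesis by (rule Lim_transform_eventually)
qed

lemma Hd_deriv: "(Hd k has_real_derivative Hd (Suc k) x) (at x)"
proof -
  consider "x > 0" | "x < 0" | "x = 0" by linarith
  then show ?thesis
  proof cases
    case 1
    have "((\<lambda>t. poly (PP k) (1/t) * exp (-1/t)) has_real_derivative Hd (Suc k) x) (at x)"
    proof -
      have "((\<lambda>t. poly (PP k) (1/t) * exp (-1/t)) has_real_derivative
         poly (pderiv (PP k)) (1/x) * (- 1 / x^2) * exp (-1/x) + poly (PP k) (1/x) * (exp (-1/x) * (1/x^2))) (at x)"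
        using 1 by (auto intro!: derivative_eq_intros DERIV_chain2[where f="poly (PP k)"] poly_DERIV
             simp: power2_eq_square field_simps)
      moreover have "poly (pderiv (PP k)) (1/x) * (- 1 / x^2) * exp (-1/x) + poly (PP k) (1/x) * (exp (-1/x) * (1/x^2))
          = Hd (Suc k) x"
        using 1 by (simp add: Hd_def field_simps power2_eq_square)
      ultimately show ?thesis by simp
    qed
    then show ?thesis
      apply (rule has_field_derivative_transform_within_open[where S="{0<..}"])
      using 1 by (auto simp: Hd_def)
  next
    case 2
    have "((\<lambda>t. 0) has_real_derivative Hd (Suc k) x) (at x)"
      using 2 by (simp add: Hd_def)
    then show ?thesis
      apply (rule has_field_derivative_transform_within_open[where S="{..<0}"])
      using 2 by (auto simp: Hd_def)
  next
    case 3
    have "((\<lambda>t. (Hd k (0 + t) - Hd k 0) / t) \<longlongrightarrow> 0) (at 0)"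
      unfolding filterlim_at_split
    proof
      show "((\<lambda>t. (Hd k (0 + t) - Hd k 0) / t) \<longlongrightarrow> 0) (at_left 0)"
        apply (rule Lim_transform_eventually[where f="\<lambda>t. 0"])
        apply simp
        using eventually_at_left_real[where a="0::real" and b="-1"] by (auto elim!: eventually_mono simp: Hd_def)
      show "((\<lambda>t. (Hd k (0 + t) - Hd k 0) / t) \<longlongrightarrow> 0) (at_right 0)"
        using Hd_lim[of k] by (simp add: Hd_def)
    qed
    then show ?thesis using 3 by (simp add: DERIV_def Hd_def)
  qed
qed

lemma Hd_0: "Hd 0 = hf"
  by (auto simp: Hd_def hf_def fun_eq_iff)

lemma sm_hf: "sm k hf"
  unfolding sm_def by (rule exI[of _ Hd]) (simp add: Hd_0 Hd_deriv)

lemma hf_nonneg: "hf t \<ge> 0" by (simp add: hf_def)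

definition rho :: "real \<Rightarrow> real" where "rho u = hf (1 * u + 1) * hf ((-1) * u + 1)"

lemma sm_rho: "sm k rho"
  unfolding rho_def[abs_def] by (intro sm_mult sm_affine sm_hf)

lemma rho_nonneg: "rho u \<ge> 0"
  by (simp add: rho_def hf_nonneg)

lemma rho_zero: "\<bar>u\<bar> \<ge> 1 \<Longrightarrow> rho u = 0"
  by (auto simp: rho_def hf_def)

lemma rho_pos: "rho 0 > 0"
  by (simp add: rho_def hf_def)

lemma rho_deriv_ex: "\<exists>r'. (rho has_real_derivative r') (at x)"
proof -
  from sm_rho[of "Suc 0"] obtain f' where "\<forall>x. (rho has_real_derivative f' x) (at x)"
    unfolding sm_Suc by blast
  then show ?thesis by blast
qed

lemma rho_cont: "continuous_on S rho"
  using rho_deriv_ex DERIV_isCont continuous_at_imp_continuous_on by blast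

definition Sd :: "real \<Rightarrow> real" where "Sd u = integral {-2..u} rho"

lemma rho_int_zero: "y \<le> -1 \<Longrightarrow> integral {-2..y} rho = 0"
proof -
  assume y: "y \<le> -1"
  have "integral {-2..y} rho = integral {-2..y} (\<lambda>t. 0)"
    by (rule integral_cong) (use y in \<open>auto intro!: rho_zero\<close>)
  then show ?thesis by simp
qed

lemma Sd_low: "u \<le> -1 \<Longrightarrow> Sd u = 0"
  by (simp add: Sd_def rho_int_zero)

lemma Sd_high: assumes "u \<ge> 1" shows "Sd u = Sd 1"
proof -
  have "integral {-2..1} rho + integral {1..u} rho = integral {-2..u} rho"
    using assms by (intro Henstock_Kurzweil_Integration.integral_combine[where f=rho] integrable_continuous_interval rho_cont) auto
  moreover have "integral {1..u} rho = integral {1..u} (\<lambda>t. 0)"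
    by (rule integral_cong) (auto intro!: rho_zero)
  ultimately show ?thesis by (simp add: Sd_def)
qed

lemma Sd_deriv: "(Sd has_real_derivative rho u) (at u)"
proof (cases "u > -3/2")
  case True
  have "(Sd has_real_derivative rho u) (at u within {-2..u+1})"
    unfolding Sd_def using True by (intro integral_has_real_derivative rho_cont) auto
  moreover have "at u within {-2..u+1} = at u"
    by (rule at_within_interior) (use True in auto)
  ultimately show ?thesis by simp
next
  case False
  have "((\<lambda>x. 0) has_real_derivative rho u) (at u)"
    using False rho_zero[of u] by simp
  then show ?thesis
    by (rule has_field_derivative_transform_within_open[where S="{..<-1}"])
       (use False in \<open>auto simp: Sd_low\<close>)
qed

lemma sm_Sd: "sm k Sd"
proof -
  have "sm (Suc k) Sd" unfolding sm_Suc using Sd_deriv sm_rho by blast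
  then show ?thesis by (rule sm_mono)
qed

lemma Sd_pos: "Sd 1 > 0"
proof -
  have ge: "Sd 1 \<ge> 0" unfolding Sd_def
    by (intro integral_nonneg integrable_continuous_interval rho_cont rho_nonneg)
  have "Sd 1 \<noteq> 0"
  proof
    assume "Sd 1 = 0"
    then have h: "(rho has_integral 0) (cbox (-2) 1)"
      unfolding Sd_def
      using integrable_integral[OF integrable_continuous_interval[OF rho_cont, of "-2" 1]]
      by simp
    have "rho 0 = 0"
      by (rule has_integral_0_cbox_imp_0[OF rho_cont _ h]) (auto simp: rho_nonneg box_real cbox_interval)
    then show False using rho_pos by simp
  qed
  then show ?thesis using ge by simp
qed

lemma bump_est:
  fixes G :: "real \<Rightarrow> real"
  assumes e: "0 < e" "a \<le> c - e" "c + e \<le> b" and G: "continuous_on {a..b} G"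
    and close: "\<forall>x\<in>{a..b}. \<bar>x - c\<bar> < e \<longrightarrow> \<bar>G x - G c\<bar> \<le> \<eta>"
  shows "\<bar>integral {a..b} (\<lambda>x. G x * (rho ((x - c) / e) / e)) - G c * Sd 1\<bar> \<le> \<eta> * Sd 1"
proof -
  define k where "k x = rho ((x - c) / e) / e" for x
  have kd: "((\<lambda>x. Sd ((x - c) / e)) has_real_derivative k x) (at x)" for x
  proof -
    have "((\<lambda>x. (x - c) / e) has_real_derivative 1 / e) (at x)"
      using e by (auto intro!: derivative_eq_intros)
    from DERIV_chain2[OF Sd_deriv this] show ?thesis unfolding k_def by simp
  qed
  have kcont: "continuous_on {a..b} k"
    unfolding k_def by (intro continuous_intros continuous_on_compose2[OF rho_cont]) (use e in auto)
  have "(k has_integral (Sd ((b - c) / e) - Sd ((a - c) / e))) {a..b}"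
    apply (rule fundamental_theorem_of_calculus)
    using e apply simp
    using kd by (auto simp: has_real_derivative_iff_has_vector_derivative[symmetric] intro: has_field_derivative_at_within)
  moreover have "Sd ((b - c) / e) = Sd 1" using e by (intro Sd_high) (simp add: field_simps)
  moreover have "Sd ((a - c) / e) = 0" using e by (intro Sd_low) (simp add: field_simps)
  ultimately have ik: "integral {a..b} k = Sd 1" by (simp add: integral_unique)
  have intk: "k integrable_on {a..b}" by (rule integrable_continuous_interval[OF kcont])
  have int1: "(\<lambda>x. G x * k x) integrable_on {a..b}"
    by (intro integrable_continuous_interval continuous_intros G kcont)
  have int2: "(\<lambda>x. (G x - G c) * k x) integrable_on {a..b}"
    by (intro integrable_continuous_interval continuous_intros G kcont)
  have "integral {a..b} (\<lambda>x. G x * k x) - G c * Sd 1 = integral {a..b} (\<lambda>x. (G x - G c) * k x)"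
  proof -
    have "integral {a..b} (\<lambda>x. (G x - G c) * k x) = integral {a..b} (\<lambda>x. G x * k x - G c * k x)"
      by (simp add: algebra_simps)
    also have "\<dots> = integral {a..b} (\<lambda>x. G x * k x) - integral {a..b} (\<lambda>x. G c * k x)"
      by (rule integral_diff[OF int1]) (intro integrable_continuous_interval continuous_intros kcont)
    also have "integral {a..b} (\<lambda>x. G c * k x) = G c * Sd 1"
      using ik by simp
    finally show ?thesis by simp
  qed
  also have "\<bar>\<dots>\<bar> \<le> integral {a..b} (\<lambda>x. \<eta> * k x)"
  proof (rule integral_norm_bound_integral[OF int2, unfolded real_norm_def])
    show "(\<lambda>x. \<eta> * k x) integrable_on {a..b}"
      by (intro integrable_continuous_interval continuous_intros kcont)
    fix x assume x: "x \<in> {a..b}"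
    have k0: "k x \<ge> 0" unfolding k_def using e by (simp add: rho_nonneg)
    show "\<bar>(G x - G c) * k x\<bar> \<le> \<eta> * k x"
    proof (cases "\<bar>x - c\<bar> < e")
      case True
      then have "\<bar>G x - G c\<bar> \<le> \<eta>" using close x by blast
      then show ?thesis using k0 by (simp add: abs_mult mult_right_mono)
    next
      case False
      then have "\<bar>(x - c) / e\<bar> \<ge> 1" using e by (simp add: abs_div field_simps)
      then have "k x = 0" unfolding k_def by (simp add: rho_zero)
      then show ?thesis by simp
    qed
  qed
  also have "\<dots> = \<eta> * Sd 1" using ik by simp
  finally show ?thesis unfolding k_def .
qed

lemma psi_props:
  assumes e: "0 < e" "a < c - e" "d + e < b" "c < d"
  defines "\<psi> \<equiv> (\<lambda>x. Sd ((x - c) / e) - Sd ((x - d) / e))"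
  shows "test_fun a b \<psi>" and "\<And>x. deriv \<psi> x = rho ((x - c) / e) / e - rho ((x - d) / e) / e"
proof -
  have eq: "\<psi> = (\<lambda>x. Sd ((1/e) * x + (-c/e)) + (-1) * Sd ((1/e) * x + (-d/e)))"
    unfolding \<psi>_def by (simp add: diff_divide_distrib)
  have sm: "sm k \<psi>" for k
    unfolding eq by (intro sm_add sm_cmult sm_affine sm_Sd)
  have "(\<forall>k x. (deriv ^^ k) \<psi> differentiable (at x))"
    using sm_deriv[OF sm] by blast
  moreover have "\<forall>x. x \<notin> {c - e..d + e} \<longrightarrow> \<psi> x = 0"
  proof (intro allI impI)
    fix x assume "x \<notin> {c - e..d + e}"
    then consider "x < c - e" | "x > d + e" by auto
    then show "\<psi> x = 0"
    proof cases
      case 1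
      then have "(x - c) / e \<le> -1" "(x - d) / e \<le> -1" using e by (simp_all add: field_simps)
      then show ?thesis unfolding \<psi>_def by (simp add: Sd_low)
    next
      case 2
      then have "(x - c) / e \<ge> 1" "(x - d) / e \<ge> 1" using e by (simp_all add: field_simps)
      then show ?thesis unfolding \<psi>_def using Sd_high[of "(x - c) / e"] Sd_high[of "(x - d) / e"] by simp
    qed
  qed
  ultimately show "test_fun a b \<psi>"
    unfolding test_fun_def using e by (intro conjI exI[of _ "c - e"] exI[of _ "d + e"]) auto
  fix x
  have d1: "((\<lambda>x. (x - c) / e) has_real_derivative 1 / e) (at x)"
    "((\<lambda>x. (x - d) / e) has_real_derivative 1 / e) (at x)"
    using e by (auto intro!: derivative_eq_intros)
  have "(\<psi> has_real_derivative rho ((x - c) / e) * (1 / e) - rho ((x - d) / e) * (1 / e)) (at x)"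
    unfolding \<psi>_def by (intro DERIV_diff DERIV_chain2[OF Sd_deriv] d1)
  then show "deriv \<psi> x = rho ((x - c) / e) / e - rho ((x - d) / e) / e"
    by (intro DERIV_imp_deriv) simp
qed

lemma dubois_const:
  fixes G :: "real \<Rightarrow> real"
  assumes ab: "a < c" "c < d" "d < b" and G: "continuous_on {a..b} G"
    and H: "\<forall>\<psi>. test_fun a b \<psi> \<longrightarrow> integral {a..b} (\<lambda>x. G x * deriv \<psi> x) = 0"
  shows "G c = G d"
proof (rule ccontr)
  assume ne: "G c \<noteq> G d"
  define \<eta> where "\<eta> = \<bar>G c - G d\<bar> / 4"
  have eta: "\<eta> > 0" using ne by (simp add: \<eta>_def)
  have cin: "c \<in> {a..b}" and din: "d \<in> {a..b}" using ab by auto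
  obtain dc where dc: "dc > 0" "\<forall>x\<in>{a..b}. dist x c < dc \<longrightarrow> dist (G x) (G c) < \<eta>"
    using G cin eta unfolding continuous_on_iff by blast
  obtain dd where dd: "dd > 0" "\<forall>x\<in>{a..b}. dist x d < dd \<longrightarrow> dist (G x) (G d) < \<eta>"
    using G din eta unfolding continuous_on_iff by blast
  define e where "e = min (min dc dd) (min (c - a) (b - d)) / 2"
  have e: "0 < e" "e < dc" "e < dd" "a < c - e" "d + e < b"
  proof -
    define m where "m = min (min dc dd) (min (c - a) (b - d))"
    have "m \<le> dc" "m \<le> dd" "m \<le> c - a" "m \<le> b - d" by (auto simp: m_def)
    moreover have "m > 0" using dc dd ab by (simp add: m_def)
    ultimately show "0 < e" "e < dc" "e < dd" "a < c - e" "d + e < b"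
      unfolding e_def m_def[symmetric] by linarith+
  qed
  define \<psi> where "\<psi> = (\<lambda>x. Sd ((x - c) / e) - Sd ((x - d) / e))"
  have T: "test_fun a b \<psi>" and Dp: "\<And>x. deriv \<psi> x = rho ((x - c) / e) / e - rho ((x - d) / e) / e"
    using psi_props[OF e(1,4,5) ab(2)] unfolding \<psi>_def by auto
  have estc: "\<bar>integral {a..b} (\<lambda>x. G x * (rho ((x - c) / e) / e)) - G c * Sd 1\<bar> \<le> \<eta> * Sd 1"
    by (rule bump_est[OF e(1) _ _ G]) (use e dc ab in \<open>auto simp: dist_real_def\<close>)
  have estd: "\<bar>integral {a..b} (\<lambda>x. G x * (rho ((x - d) / e) / e)) - G d * Sd 1\<bar> \<le> \<eta> * Sd 1"
    by (rule bump_est[OF e(1) _ _ G]) (use e dd ab in \<open>auto simp: dist_real_def\<close>)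
  have cont_k: "continuous_on {a..b} (\<lambda>x. rho ((x - u) / e) / e)" for u
    by (intro continuous_intros continuous_on_compose2[OF rho_cont]) (use e in auto)
  have "0 = integral {a..b} (\<lambda>x. G x * deriv \<psi> x)" using H T by simp
  also have "\<dots> = integral {a..b} (\<lambda>x. G x * (rho ((x - c) / e) / e) - G x * (rho ((x - d) / e) / e))"
    unfolding Dp by (simp add: algebra_simps)
  also have "\<dots> = integral {a..b} (\<lambda>x. G x * (rho ((x - c) / e) / e)) - integral {a..b} (\<lambda>x. G x * (rho ((x - d) / e) / e))"
    by (intro integral_diff integrable_continuous_interval continuous_intros G cont_k)
  finally have eq: "integral {a..b} (\<lambda>x. G x * (rho ((x - c) / e) / e)) = integral {a..b} (\<lambda>x. G x * (rho ((x - d) / e) / e))"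
    by simp
  have "\<bar>G c - G d\<bar> * Sd 1 = \<bar>G c * Sd 1 - G d * Sd 1\<bar>"
    using Sd_pos by (simp add: abs_mult left_diff_distrib[symmetric])
  also have "\<dots> \<le> 2 * \<eta> * Sd 1" using estc estd eq by linarith
  finally have "\<bar>G c - G d\<bar> \<le> 2 * \<eta>" using Sd_pos by simp
  then show False using eta unfolding \<eta>_def by (simp add: field_simps)
qed

lemma dubois_zero:
  fixes G :: "real \<Rightarrow> real"
  assumes ab: "a < b" and G: "continuous_on {a..b} G" and G0: "G a = 0"
    and H: "\<forall>\<psi>. test_fun a b \<psi> \<longrightarrow> integral {a..b} (\<lambda>x. G x * deriv \<psi> x) = 0"
    and x: "x \<in> {a..b}"
  shows "G x = 0"
proof -
  have const: "G u = G v" if "a < u" "u < b" "a < v" "v < b" for u v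
  proof -
    consider "u < v" | "u = v" | "v < u" by linarith
    then show ?thesis
    proof cases
      case 1 then show ?thesis using dubois_const[OF that(1) 1 that(4) G H] by simp
    next
      case 2 then show ?thesis by simp
    next
      case 3 then show ?thesis using dubois_const[OF that(3) 3 that(2) G H] by simp
    qed
  qed
  have mid: "G y = 0" if y: "a < y" "y < b" for y
  proof (rule ccontr)
    assume ne: "G y \<noteq> 0"
    have ain: "a \<in> {a..b}" using ab by simp
    have gp: "\<bar>G y\<bar> > 0" using ne by simp
    have "\<exists>dl>0. \<forall>z\<in>{a..b}. dist z a < dl \<longrightarrow> dist (G z) (G a) < \<bar>G y\<bar>"
      using G ain gp unfolding continuous_on_iff by blast
    then obtain dl where dl: "dl > 0" "\<forall>z\<in>{a..b}. dist z a < dl \<longrightarrow> dist (G z) (G a) < \<bar>G y\<bar>"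
      by blast
    define m where "m = min dl (y - a)"
    have m: "m \<le> dl" "m \<le> y - a" "m > 0" using dl y by (auto simp: m_def)
    define z where "z = a + m / 2"
    have z1: "a < z" unfolding z_def using m by linarith
    have z2: "z < y" unfolding z_def using m by linarith
    have z3: "dist z a < dl" unfolding z_def dist_real_def using m by simp
    note z = z1 z2 z3
    then have "dist (G z) (G a) < \<bar>G y\<bar>" using dl y by auto
    moreover have "G z = G y" using z y by (intro const) auto
    ultimately show False using G0 by (simp add: dist_real_def)
  qed
  show ?thesis
  proof (cases "x = a \<or> x = b")
    case False then show ?thesis using mid x by auto
  next
    case True
    show ?thesis
    proof (cases "x = a")
      case True then show ?thesis using G0 by simp
    next
      case False
      then have xb: "x = b" using \<open>x = a \<or> x = b\<close> by simp
      show ?thesis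
      proof (rule ccontr)
        assume ne: "G x \<noteq> 0"
        have bin: "b \<in> {a..b}" using ab by simp
        have gp: "\<bar>G x\<bar> > 0" using ne by simp
        have "\<exists>dl>0. \<forall>z\<in>{a..b}. dist z b < dl \<longrightarrow> dist (G z) (G b) < \<bar>G x\<bar>"
          using G bin gp unfolding continuous_on_iff by blast
        then obtain dl where dl: "dl > 0" "\<forall>z\<in>{a..b}. dist z b < dl \<longrightarrow> dist (G z) (G b) < \<bar>G x\<bar>"
          by blast
        define m where "m = min dl (b - a)"
        have m: "m \<le> dl" "m \<le> b - a" "m > 0" using dl ab by (auto simp: m_def)
        define z where "z = b - m / 2"
        have z1: "a < z" unfolding z_def using m by linarith
        have z2: "z < b" unfolding z_def using m by linarith
        have z3: "dist z b < dl" unfolding z_def dist_real_def using m by simp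
        note z = z1 z2 z3
        then have "dist (G z) (G b) < \<bar>G x\<bar>" using dl by auto
        moreover have "G z = 0" using mid z by auto
        ultimately show False using xb by (simp add: dist_real_def)
      qed
    qed
  qed
qed


lemma prim_unique:
  assumes ab: "a < b" and P1: "distr_primitive a b T F1" and P2: "distr_primitive a b T F2"
    and x: "x \<in> {a..b}"
  shows "F1 x = F2 x"
proof -
  have c1: "continuous_on {a..b} F1" "F1 a = 0" and c2: "continuous_on {a..b} F2" "F2 a = 0"
    using P1 P2 by (auto simp: distr_primitive_def C0_def)
  have "(F1 x - F2 x) = 0"
  proof (rule dubois_zero[where G="\<lambda>x. F1 x - F2 x", OF ab _ _ _ x])
    show "continuous_on {a..b} (\<lambda>x. F1 x - F2 x)" by (intro continuous_intros c1 c2)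
    show "F1 a - F2 a = 0" using c1 c2 by simp
    show "\<forall>\<psi>. test_fun a b \<psi> \<longrightarrow> integral {a..b} (\<lambda>x. (F1 x - F2 x) * deriv \<psi> x) = 0"
    proof (intro allI impI)
      fix \<psi> assume T: "test_fun a b \<psi>"
      then have "\<forall>x. (deriv ^^ 1) \<psi> differentiable (at x)" unfolding test_fun_def by blast
      then have dc: "continuous_on {a..b} (deriv \<psi>)"
        by (simp add: differentiable_imp_continuous_within continuous_at_imp_continuous_on)
      have i1: "(\<lambda>x. F1 x * deriv \<psi> x) integrable_on {a..b}" and i2: "(\<lambda>x. F2 x * deriv \<psi> x) integrable_on {a..b}"
        by (intro integrable_continuous_interval continuous_intros c1 c2 dc)+
      have "integral {a..b} (\<lambda>x. (F1 x - F2 x) * deriv \<psi> x) = integral {a..b} (\<lambda>x. F1 x * deriv \<psi> x - F2 x * deriv \<psi> x)"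
        by (simp add: algebra_simps)
      also have "\<dots> = integral {a..b} (\<lambda>x. F1 x * deriv \<psi> x) - integral {a..b} (\<lambda>x. F2 x * deriv \<psi> x)"
        by (rule integral_diff[OF i1 i2])
      also have "\<dots> = 0" using P1 P2 T unfolding distr_primitive_def by (metis diff_self minus_equation_iff)
      finally show "integral {a..b} (\<lambda>x. (F1 x - F2 x) * deriv \<psi> x) = 0" .
    qed
  qed
  then show ?thesis by simp
qed

definition VV :: "real \<Rightarrow> nat \<Rightarrow> (real \<Rightarrow> real) \<Rightarrow> real \<Rightarrow> real" where
  "VV a j F x = integral {a..x} (\<lambda>t. F t * (x - t) ^ j)"

lemma byparts:
  assumes F: "continuous_on {a..b} F" and x: "x \<in> {a..b}"
  shows "VV a (Suc j) F x = real (Suc j) * VV a j (\<lambda>x. integral {a..x} F) x"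
proof -
  define \<Phi> where "\<Phi> = (\<lambda>x. integral {a..x} F)"
  have ax: "a \<le> x" using x by simp
  have Fx: "continuous_on {a..x} F" using F by (rule continuous_on_subset) (use x in auto)
  have Phic: "continuous_on {a..x} \<Phi>"
    unfolding \<Phi>_def by (rule indefinite_integral_continuous_1[OF integrable_continuous_interval[OF Fx]])
  have "((\<lambda>t. F t * (x - t) ^ Suc j) has_integral real (Suc j) * VV a j \<Phi> x) {a..x}"
  proof (rule integration_by_parts_interior[OF bounded_bilinear_mult ax Phic, where g="\<lambda>t. (x - t) ^ Suc j"
        and g'="\<lambda>t. - (real (Suc j) * (x - t) ^ j)"])
    show "continuous_on {a..x} (\<lambda>t. (x - t) ^ Suc j)" by (intro continuous_intros)
    fix t assume t: "t \<in> {a<..<x}"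
    show "((\<lambda>t. (x - t) ^ Suc j) has_vector_derivative - (real (Suc j) * (x - t) ^ j)) (at t)"
      unfolding has_real_derivative_iff_has_vector_derivative[symmetric]
      apply (rule derivative_eq_intros refl)+
      by (cases j) (auto simp: algebra_simps)
  next
    fix t assume t: "t \<in> {a<..<x}"
    have "(\<Phi> has_real_derivative F t) (at t within {a..x})"
      unfolding \<Phi>_def by (rule integral_has_real_derivative[OF Fx]) (use t in auto)
    moreover have "at t within {a..x} = at t" by (rule at_within_interior) (use t in auto)
    ultimately show "(\<Phi> has_vector_derivative F t) (at t)"
      by (simp add: has_real_derivative_iff_has_vector_derivative)
  next
    have int: "((\<lambda>t. \<Phi> t * (x - t) ^ j) has_integral VV a j \<Phi> x) {a..x}"
      unfolding VV_def
      by (intro integrable_integral integrable_continuous_interval continuous_intros Phic)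
    have "\<Phi> a = 0" by (simp add: \<Phi>_def)
    then show "((\<lambda>t. \<Phi> t * - (real (Suc j) * (x - t) ^ j)) has_integral
        \<Phi> x * (x - x) ^ Suc j - \<Phi> a * (x - a) ^ Suc j - real (Suc j) * VV a j \<Phi> x) {a..x}"
      using has_integral_neg[OF has_integral_mult_right[OF int, of "real (Suc j)"]]
      by (simp add: algebra_simps)
  qed
  then show ?thesis unfolding VV_def \<Phi>_def by (rule integral_unique)
qed

lemma VV_deriv:
  assumes F: "continuous_on {a..b} F" and x: "x \<in> {a..b}"
  shows "((\<lambda>x. VV a j F x) has_real_derivative (if j = 0 then F x else real j * VV a (j - 1) F x))
          (at x within {a..b})"
  using F x
proof (induction j arbitrary: F x)
  case 0
  have "((\<lambda>x. integral {a..x} F) has_real_derivative F x) (at x within {a..b})"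
    by (rule integral_has_real_derivative[OF 0(1,2)])
  moreover have "(\<lambda>x. VV a 0 F x) = (\<lambda>x. integral {a..x} F)" by (simp add: VV_def)
  ultimately show ?case by simp
next
  case (Suc j)
  define \<Phi> where "\<Phi> = (\<lambda>x. integral {a..x} F)"
  have Phic: "continuous_on {a..b} \<Phi>"
    unfolding \<Phi>_def by (rule indefinite_integral_continuous_1[OF integrable_continuous_interval[OF Suc.prems(1)]])
  have IH: "((\<lambda>x. VV a j \<Phi> x) has_real_derivative (if j = 0 then \<Phi> x else real j * VV a (j - 1) \<Phi> x))
          (at x within {a..b})" by (rule Suc.IH[OF Phic Suc.prems(2)])
  have tgt: "real (Suc j) * (if j = 0 then \<Phi> x else real j * VV a (j - 1) \<Phi> x) = real (Suc j) * VV a j F x"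
  proof (cases j)
    case 0 then show ?thesis by (simp add: VV_def \<Phi>_def)
  next
    case (Suc i)
    then show ?thesis using byparts[OF Suc.prems(1,2), of i] by (simp add: \<Phi>_def)
  qed
  have "((\<lambda>x. real (Suc j) * VV a j \<Phi> x) has_real_derivative real (Suc j) * VV a j F x) (at x within {a..b})"
    using DERIV_cmult[OF IH, of "real (Suc j)"] tgt by simp
  then have "(VV a (Suc j) F has_real_derivative real (Suc j) * VV a j F x) (at x within {a..b})"
    by (rule has_field_derivative_transform_within[where d=1])
       (use Suc.prems byparts[OF Suc.prems(1)] in \<open>auto simp: \<Phi>_def\<close>)
  then show ?case by simp
qed

lemma hk_eval:
  assumes ab: "a < b" and P: "distr_primitive a b \<phi> F" and x: "x \<in> {a..b}"
  shows "hk_int_mult a b \<phi> g x = F x * g x - integral {a..x} (\<lambda>t. F t * deriv g t)"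
proof -
  have uni: "v = F x * g x - integral {a..x} (\<lambda>t. F t * deriv g t)"
    if ex: "\<exists>F'. distr_primitive a b \<phi> F' \<and> v = F' x * g x - integral {a..x} (\<lambda>t. F' t * deriv g t)" for v
  proof -
    obtain F' where P': "distr_primitive a b \<phi> F'" and v: "v = F' x * g x - integral {a..x} (\<lambda>t. F' t * deriv g t)"
      using ex by blast
    have "integral {a..x} (\<lambda>t. F' t * deriv g t) = integral {a..x} (\<lambda>t. F t * deriv g t)"
      by (rule integral_cong) (use prim_unique[OF ab P' P] x in auto)
    moreover have "F' x = F x" using prim_unique[OF ab P' P x] .
    ultimately show ?thesis using v by simp
  qed
  show ?thesis unfolding hk_int_mult_def
    by (rule the_equality) (use P uni in blast)+
qed

lemma deriv_pow: "deriv (\<lambda>t. (x - t) ^ m) t = - (real m * (x - t) ^ (m - 1))"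
  by (rule DERIV_imp_deriv) (auto intro!: derivative_eq_intros)

definition JJ :: "real \<Rightarrow> nat \<Rightarrow> (real \<Rightarrow> real) \<Rightarrow> real \<Rightarrow> real" where
  "JJ a m F x = (if m = 0 then F x else VV a (m - 1) F x / fact (m - 1))"

lemma hk_J:
  assumes ab: "a < b" and P: "distr_primitive a b \<phi> F" and x: "x \<in> {a..b}"
  shows "1 / fact m * hk_int_mult a b \<phi> (\<lambda>t. (x - t) ^ m) x = JJ a m F x"
proof -
  have "hk_int_mult a b \<phi> (\<lambda>t. (x - t) ^ m) x
      = F x * (x - x) ^ m - integral {a..x} (\<lambda>t. - (real m * (F t * (x - t) ^ (m - 1))))"
    unfolding hk_eval[OF ab P x] deriv_pow by (simp add: algebra_simps)
  also have "\<dots> = F x * 0 ^ m + real m * VV a (m - 1) F x"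
    by (simp add: VV_def)
  finally have h: "hk_int_mult a b \<phi> (\<lambda>t. (x - t) ^ m) x = F x * 0 ^ m + real m * VV a (m - 1) F x" .
  show ?thesis
  proof (cases m)
    case 0 then show ?thesis using h by (simp add: JJ_def)
  next
    case (Suc i) then show ?thesis using h by (simp add: JJ_def)
  qed
qed

lemma JJ_deriv:
  assumes F: "continuous_on {a..b} F" and x: "x \<in> {a..b}"
  shows "(JJ a (Suc j) F has_real_derivative JJ a j F x) (at x within {a..b})"
proof -
  have "((\<lambda>x. VV a j F x / fact j) has_real_derivative
       (if j = 0 then F x else real j * VV a (j - 1) F x) / fact j) (at x within {a..b})"
    by (intro DERIV_cdivide VV_deriv[OF F x])
  moreover have "(if j = 0 then F x else real j * VV a (j - 1) F x) / fact j = JJ a j F x"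
  proof (cases j)
    case 0 then show ?thesis by (simp add: JJ_def)
  next
    case (Suc i) then show ?thesis by (simp add: JJ_def)
  qed
  moreover have "JJ a (Suc j) F = (\<lambda>x. VV a j F x / fact j)" by (simp add: JJ_def fun_eq_iff)
  ultimately show ?thesis by simp
qed

lemma int_pow: assumes "a \<le> x" shows "integral {a..x} (\<lambda>t. (x - t) ^ i) = (x - a) ^ Suc i / real (Suc i)"
proof -
  have "((\<lambda>t. (x - t) ^ i) has_integral ((\<lambda>t. - ((x - t) ^ Suc i / real (Suc i))) x - (\<lambda>t. - ((x - t) ^ Suc i / real (Suc i))) a)) {a..x}"
  proof (rule fundamental_theorem_of_calculus[OF assms])
    fix t assume "t \<in> {a..x}"
    have "((\<lambda>t. - ((x - t) ^ Suc i / real (Suc i))) has_real_derivative (x - t) ^ i) (at t)"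
    proof -
      have d: "((\<lambda>t. (x - t) ^ Suc i) has_real_derivative - (real (Suc i) * (x - t) ^ i)) (at t)"
        using deriv_pow[of x "Suc i" t] DERIV_imp_deriv
        by (auto intro!: derivative_eq_intros) (cases i; auto simp: algebra_simps)
      from DERIV_minus[OF DERIV_cdivide[OF d, of "real (Suc i)"]] show ?thesis
        by (simp del: of_nat_Suc)
    qed
    then show "((\<lambda>t. - ((x - t) ^ Suc i / real (Suc i))) has_vector_derivative (x - t) ^ i) (at t within {a..x})"
      by (simp add: has_real_derivative_iff_has_vector_derivative[symmetric] has_field_derivative_at_within)
  qed
  then show ?thesis by (simp add: integral_unique)
qed

lemma poly_shift_deriv: "((\<lambda>x. poly q (x - a)) has_real_derivative poly (pderiv q) (x - a)) (at x)"
proof -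
  have "((\<lambda>x. x - a) has_real_derivative 1) (at x)" by (auto intro!: derivative_eq_intros)
  from DERIV_chain2[OF poly_DERIV this] show ?thesis by simp
qed

lemma poly_sum_monom: fixes c :: "nat \<Rightarrow> real" shows "poly (\<Sum>k<n. monom (c k) k) y = (\<Sum>k<n. c k * y ^ k)"
  by (simp add: poly_sum Polynomial.poly_monom)

lemma dir_back:
  assumes ab: "a < b" and P: "distr_primitive a b \<phi> F"
    and f: "\<forall>x\<in>{a..b}. f x = 1 / fact m * hk_int_mult a b \<phi> (\<lambda>t. (x - t) ^ m) x + (\<Sum>k<Suc m. c k * (x - a) ^ k)"
  shows "Cn a b (Suc m) f"
proof -
  define p where "p = (\<Sum>k<Suc m. monom (c k) k)"
  have Fc: "continuous_on {a..b} F" using P by (simp add: distr_primitive_def C0_def)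
  define D where "D k x = JJ a (m - k) F x + poly ((pderiv ^^ k) p) (x - a)" for k x
  have "\<forall>x\<in>{a..b}. D 0 x = f x"
    using f hk_J[OF ab P] unfolding D_def funpow_0 p_def poly_sum_monom by simp
  moreover have "\<forall>x\<in>{a..b}. (D k has_real_derivative D (Suc k) x) (at x within {a..b})" if k: "k + 1 < Suc m" for k
  proof
    fix x assume x: "x \<in> {a..b}"
    have mk: "m - k = Suc (m - Suc k)" using k by simp
    have "((\<lambda>x. JJ a (m - k) F x + poly ((pderiv ^^ k) p) (x - a)) has_real_derivative
        JJ a (m - Suc k) F x + poly (pderiv ((pderiv ^^ k) p)) (x - a)) (at x within {a..b})"
      unfolding mk
      by (intro DERIV_add JJ_deriv[OF Fc x] has_field_derivative_at_within[OF poly_shift_deriv])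
    then show "(D k has_real_derivative D (Suc k) x) (at x within {a..b})"
      by (simp add: D_def[abs_def])
  qed
  moreover have "continuous_on {a..b} (D (Suc m - 1))"
  proof -
    have "D (Suc m - 1) = (\<lambda>x. F x + poly ((pderiv ^^ m) p) (x - a))"
      by (simp add: D_def[abs_def] JJ_def)
    then show ?thesis by (simp add: continuous_intros Fc)
  qed
  ultimately show ?thesis unfolding Cn_def by blast
qed

lemma dir_fwd:
  assumes ab: "a < b" and C: "Cn a b (Suc m) f"
  shows "\<exists>\<phi> c. \<phi> \<in> D_HK a b \<and>
       (\<forall>x\<in>{a..b}. f x = 1 / fact m * hk_int_mult a b \<phi> (\<lambda>t. (x - t) ^ m) x
                          + (\<Sum>k<Suc m. c k * (x - a) ^ k))"
proof -
  obtain D where D0: "\<forall>x\<in>{a..b}. D 0 x = f x"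
    and Dd: "\<And>k. k + 1 < Suc m \<Longrightarrow> \<forall>x\<in>{a..b}. (D k has_real_derivative D (Suc k) x) (at x within {a..b})"
    and Dc: "continuous_on {a..b} (D m)"
    using C unfolding Cn_def by auto
  define F where "F x = D m x - D m a" for x
  define \<phi> where "\<phi> = (\<lambda>\<psi>. - integral {a..b} (\<lambda>x. F x * deriv \<psi> x))"
  have Fc: "continuous_on {a..b} F" unfolding F_def[abs_def] by (intro continuous_intros Dc)
  have P: "distr_primitive a b \<phi> F"
    unfolding distr_primitive_def C0_def \<phi>_def using Fc by (simp add: F_def)
  have "\<phi> \<in> D_HK a b" unfolding D_HK_def using P by blast
  moreover have "f x = 1 / fact m * hk_int_mult a b \<phi> (\<lambda>t. (x - t) ^ m) x
                          + (\<Sum>k<Suc m. D k a / fact k * (x - a) ^ k)" if x: "x \<in> {a..b}" for x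
  proof -
    have "f x = JJ a m F x + (\<Sum>k<Suc m. D k a / fact k * (x - a) ^ k)"
    proof (cases m)
      case 0
      then show ?thesis using D0 x ab by (simp add: JJ_def F_def)
    next
      case (Suc i)
      have ax: "a \<le> x" using x by simp
      have T: "D 0 x = (\<Sum>j<Suc i. ((x - a) ^ j / fact j) *\<^sub>R D j a) + integral {a..x} (\<lambda>t. ((x - t) ^ (Suc i - 1) / fact (Suc i - 1)) *\<^sub>R D (Suc i) t)"
      proof (rule Taylor_integral[where f="D 0" and Df=D, OF _ refl _ ax])
        show "0 < Suc i" by simp
        fix j t assume j: "j < Suc i" and t: "a \<le> t" "t \<le> x"
        have "(D j has_real_derivative D (Suc j) t) (at t within {a..b})"
          using Dd[of j] j t x Suc by auto
        then have "(D j has_real_derivative D (Suc j) t) (at t within {a..x})"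
          by (rule has_field_derivative_subset) (use x in auto)
        then show "(D j has_vector_derivative D (Suc j) t) (at t within {a..x})"
          by (simp add: has_real_derivative_iff_has_vector_derivative)
      qed
      have Dmc: "continuous_on {a..x} (D m)" using Dc by (rule continuous_on_subset) (use x in auto)
      have Fxc: "continuous_on {a..x} F" using Fc by (rule continuous_on_subset) (use x in auto)
      have "integral {a..x} (\<lambda>t. ((x - t) ^ i / fact i) * D (Suc i) t)
          = integral {a..x} (\<lambda>t. F t * (x - t) ^ i / fact i + D m a / fact i * (x - t) ^ i)"
        by (rule integral_cong) (simp add: F_def Suc field_simps)
      also have "\<dots> = integral {a..x} (\<lambda>t. F t * (x - t) ^ i / fact i) + integral {a..x} (\<lambda>t. D m a / fact i * (x - t) ^ i)"
        by (intro integral_add integrable_continuous_interval continuous_intros Fxc) auto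
      also have "\<dots> = VV a i F x / fact i + D m a / fact i * ((x - a) ^ Suc i / real (Suc i))"
        using int_pow[OF ax, of i] by (simp add: VV_def)
      finally have I: "integral {a..x} (\<lambda>t. ((x - t) ^ i / fact i) * D (Suc i) t) =
          VV a i F x / fact i + D m a / fact (Suc i) * (x - a) ^ Suc i"
        by (simp add: field_simps del: of_nat_Suc)
      have "f x = D 0 x" using D0 x by simp
      also have "\<dots> = (\<Sum>j<Suc i. D j a / fact j * (x - a) ^ j) + (VV a i F x / fact i + D m a / fact (Suc i) * (x - a) ^ Suc i)"
        using T I by (simp add: mult.commute)
      also have "\<dots> = JJ a m F x + (\<Sum>k<Suc m. D k a / fact k * (x - a) ^ k)"
        by (simp add: Suc JJ_def)
      finally show ?thesis .
    qed
    then show ?thesis using hk_J[OF ab P x, of m] by simp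
  qed
  ultimately show ?thesis
    by (intro exI[of _ \<phi>] exI[of _ "\<lambda>k. D k a / fact k"]) auto
qed

theorem lemma4p16:
  fixes a b :: real and n :: nat and f :: "real \<Rightarrow> real"
  assumes "a < b" and "n \<ge> 1"
  shows "Cn a b n f \<longleftrightarrow>
    (\<exists>\<phi> c. \<phi> \<in> D_HK a b \<and>
       (\<forall>x\<in>{a..b}. f x = 1 / fact (n - 1) * hk_int_mult a b \<phi> (\<lambda>t. (x - t) ^ (n - 1)) x
                          + (\<Sum>k<n. c k * (x - a) ^ k)))"
proof -
  obtain m where n: "n = Suc m" using assms(2) by (cases n) auto
  show ?thesis
  proof
    assume "Cn a b n f"
    then show "\<exists>\<phi> c. \<phi> \<in> D_HK a b \<and>
       (\<forall>x\<in>{a..b}. f x = 1 / fact (n - 1) * hk_int_mult a b \<phi> (\<lambda>t. (x - t) ^ (n - 1)) x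
                          + (\<Sum>k<n. c k * (x - a) ^ k))"
      using dir_fwd[OF assms(1)] n by simp
  next
    assume "\<exists>\<phi> c. \<phi> \<in> D_HK a b \<and>
       (\<forall>x\<in>{a..b}. f x = 1 / fact (n - 1) * hk_int_mult a b \<phi> (\<lambda>t. (x - t) ^ (n - 1)) x
                          + (\<Sum>k<n. c k * (x - a) ^ k))"
    then obtain \<phi> c F where P: "distr_primitive a b \<phi> F" and
      f: "\<forall>x\<in>{a..b}. f x = 1 / fact m * hk_int_mult a b \<phi> (\<lambda>t. (x - t) ^ m) x + (\<Sum>k<Suc m. c k * (x - a) ^ k)"
      unfolding D_HK_def n by auto
    show "Cn a b n f" unfolding n by (rule dir_back[OF assms(1) P f])
  qed
qed

end
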